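(* Every shift space $X\subseteq\mathscr{A}^\infty$ with the $\bar d$-shadowing property is $\bar d$-approachable.
   Context: $\mathscr{A}$ finite; shift spaces are nonempty closed shift-invariant subsets of $\mathscr{A}^{\mathbb N_0}$; $\mathcal L(X)$, $\mathcal L_n(X)$ denote the words (of length $n$) appearing in $X$. $\bar d(x,y)=\limsup_{n\to\infty}\frac1n|\{0\le j<n:x_j\ne y_j\}|$; $\bar d^H(A,B)=\max\{\sup_{a\in A}\inf_{b\in B}\bar d(a,b),\sup_{b\in B}\inf_{a\in A}\bar d(a,b)\}$. $X$ has the $\bar d$-shadowing property if for every $\varepsilon>0$ there is $N$ such that for every sequence $(w^{(j)})_{j\ge1}$ in $\mathcal L(X)$ with $|w^{(j)}|\ge N$ there is $x'\in X$ with $\bar d(w^{(1)}w^{(2)}\cdots,x')<\varepsilon$. The $n$-th Markov approximation $X^M_n$ is the set of $x\in\mathscr{A}^{\mathbb N_0}$ all of whose subwords of length $n+1$ lie in $\mathcal L_{n+1}(X)$. $X$ is $\bar d$-approachable if $\bar d^H(X^M_n,X)\to0$ as $n\to\infty$. *)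

theory Defs
  imports "HOL-Analysis.Analysis" "HOL-Library.Extended_Real"
begin

type_synonym 'a seq = "nat \<Rightarrow> 'a"

definition shift :: "'a seq \<Rightarrow> 'a seq" where
  "shift x = (\<lambda>n. x (Suc n))"

definition subword :: "'a seq \<Rightarrow> nat \<Rightarrow> nat \<Rightarrow> 'a list" where
  "subword x i n = map x [i..<i+n]"

text \<open>Closedness in the product topology of the discrete alphabet:
  x is in the closure of X iff every finite prefix of x is a prefix of some point of X.\<close>
definition seq_closed :: "'a seq set \<Rightarrow> bool" where
  "seq_closed X \<longleftrightarrow> (\<forall>x. (\<forall>n. \<exists>y\<in>X. \<forall>i<n. y i = x i) \<longrightarrow> x \<in> X)"

definition shift_space :: "('a::finite) seq set \<Rightarrow> bool" where
  "shift_space X \<longleftrightarrow> X \<noteq> {} \<and> seq_closed X \<and> shift ` X \<subseteq> X"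

definition lang :: "'a seq set \<Rightarrow> 'a list set" where
  "lang X = {w. \<exists>x\<in>X. \<exists>i. w = subword x i (length w)}"

definition lang_n :: "'a seq set \<Rightarrow> nat \<Rightarrow> 'a list set" where
  "lang_n X n = {w \<in> lang X. length w = n}"

definition dbar :: "'a seq \<Rightarrow> 'a seq \<Rightarrow> ereal" where
  "dbar x y = limsup (\<lambda>n. ereal (real (card {j. j < n \<and> x j \<noteq> y j}) / real n))"

definition dbar_H :: "'a seq set \<Rightarrow> 'a seq set \<Rightarrow> ereal" where
  "dbar_H A B = max (SUP a\<in>A. INF b\<in>B. dbar a b) (SUP b\<in>B. INF a\<in>A. dbar a b)"

text \<open>Infinite concatenation w 0 w 1 w 2 ... of nonempty words.\<close>
definition cat_start :: "(nat \<Rightarrow> 'a list) \<Rightarrow> nat \<Rightarrow> nat" where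
  "cat_start w k = (\<Sum>j<k. length (w j))"

definition inf_concat :: "(nat \<Rightarrow> 'a list) \<Rightarrow> 'a seq" where
  "inf_concat w p = (let k = (LEAST k. p < cat_start w (Suc k)) in w k ! (p - cat_start w k))"

definition dbar_shadowing :: "'a seq set \<Rightarrow> bool" where
  "dbar_shadowing X \<longleftrightarrow> (\<forall>\<epsilon>>0. \<exists>N>0. \<forall>w :: nat \<Rightarrow> 'a list.
      (\<forall>j. w j \<in> lang X \<and> length (w j) \<ge> N) \<longrightarrow>
      (\<exists>x'\<in>X. dbar (inf_concat w) x' < ereal \<epsilon>))"

definition markov_approx :: "'a seq set \<Rightarrow> nat \<Rightarrow> 'a seq set" where
  "markov_approx X n = {x. \<forall>i. subword x i (n+1) \<in> lang_n X (n+1)}"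

definition dbar_approachable :: "'a seq set \<Rightarrow> bool" where
  "dbar_approachable X \<longleftrightarrow> (\<lambda>n. dbar_H (markov_approx X n) X) \<longlonglongrightarrow> 0"

end

theory Submission
  imports Defs
begin

lemma dbar_nonneg: "0 \<le> dbar x y"
  unfolding dbar_def by (rule le_Limsup) auto

lemma dbar_refl: "dbar x x = 0"
  unfolding dbar_def by (simp add: Limsup_const)

lemma subword_lang: "subword x i n \<in> lang {x}"
  unfolding lang_def subword_def by auto

lemma lang_mono: "A \<subseteq> B \<Longrightarrow> lang A \<subseteq> lang B"
  unfolding lang_def by blast

lemma subset_markov: "X \<subseteq> markov_approx X n"
proof
  fix x assume "x \<in> X"
  then have "subword x i (n+1) \<in> lang X" for i
    using subword_lang lang_mono[of "{x}" X] by blast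
  then show "x \<in> markov_approx X n"
    unfolding markov_approx_def lang_n_def by (simp add: subword_def)
qed

lemma concat_blocks:
  fixes x :: "'a seq" and m :: nat
  assumes "m > 0"
  shows "inf_concat (\<lambda>j. subword x (j*m) m) = x"
proof
  fix p
  let ?w = "\<lambda>j. subword x (j*m) m"
  have cs: "cat_start ?w k = k*m" for k
    unfolding cat_start_def subword_def by simp
  have L: "(LEAST k. p < cat_start ?w (Suc k)) = p div m"
  proof (rule Least_equality)
    show "p < cat_start ?w (Suc (p div m))" unfolding cs
      using assms by (metis add.commute div_mult_mod_eq mod_less_divisor mult_Suc nat_add_left_cancel_less)
  next
    fix y assume "p < cat_start ?w (Suc y)"
    then have "p < (Suc y) * m" unfolding cs .
    then have "p div m < Suc y" using assms by (simp add: div_less_iff_less_mult)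
    then show "p div m \<le> y" by simp
  qed
  have "p - p div m * m = p mod m" by (simp add: minus_div_mult_eq_mod)
  moreover have "p mod m < m" using assms by simp
  ultimately have "?w (p div m) ! (p - cat_start ?w (p div m)) = x p"
    unfolding cs unfolding subword_def by (simp add: add.commute)
  moreover have "inf_concat ?w p = ?w (p div m) ! (p - cat_start ?w (p div m))"
    unfolding inf_concat_def Let_def L by (rule refl)
  ultimately show "inf_concat ?w p = x p" by simp
qed

theorem mainTheorem7:
  fixes X :: "('a::finite) seq set"
  assumes "shift_space X" and "dbar_shadowing X"
  shows "dbar_approachable X"
proof -
  have Xne: "X \<noteq> {}" using assms(1) unfolding shift_space_def by blast
  let ?f = "\<lambda>n. dbar_H (markov_approx X n) X"
  have nonneg: "0 \<le> ?f n" for n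
  proof -
    obtain b where b: "b \<in> X" using Xne by blast
    have "0 \<le> (INF a\<in>markov_approx X n. dbar a b)"
      by (rule INF_greatest) (rule dbar_nonneg)
    also have "\<dots> \<le> (SUP b\<in>X. INF a\<in>markov_approx X n. dbar a b)"
      using b by (rule SUP_upper)
    finally show ?thesis unfolding dbar_H_def by (simp add: le_max_iff_disj)
  qed
  have small: "\<exists>N. \<forall>n\<ge>N. ?f n \<le> ereal e" if e: "e > 0" for e
  proof -
    obtain N where N: "N > 0" and sh: "\<And>w :: nat \<Rightarrow> 'a list.
      (\<forall>j. w j \<in> lang X \<and> length (w j) \<ge> N) \<Longrightarrow>
      (\<exists>x'\<in>X. dbar (inf_concat w) x' < ereal e)"
      using assms(2) e unfolding dbar_shadowing_def by blast
    have "?f n \<le> ereal e" if n: "n \<ge> N" for n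
    proof -
      have A: "(SUP a\<in>markov_approx X n. INF b\<in>X. dbar a b) \<le> ereal e"
      proof (rule SUP_least)
        fix a assume a: "a \<in> markov_approx X n"
        let ?w = "\<lambda>j. subword a (j*(n+1)) (n+1)"
        have "\<forall>j. ?w j \<in> lang X \<and> length (?w j) \<ge> N"
          using a n unfolding markov_approx_def lang_n_def by (auto simp: subword_def)
        then have "\<exists>x'\<in>X. dbar (inf_concat ?w) x' < ereal e" by (rule sh)
        then obtain x' where x': "x' \<in> X" "dbar (inf_concat ?w) x' < ereal e"
          by blast
        have "inf_concat ?w = a" by (rule concat_blocks) simp
        then have "dbar a x' < ereal e" using x' by simp
        moreover have "(INF b\<in>X. dbar a b) \<le> dbar a x'" using x'(1) by (rule INF_lower)
        ultimately show "(INF b\<in>X. dbar a b) \<le> ereal e" by simp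
      qed
      have B: "(SUP b\<in>X. INF a\<in>markov_approx X n. dbar a b) \<le> ereal e"
      proof (rule SUP_least)
        fix b assume b: "b \<in> X"
        then have "b \<in> markov_approx X n" using subset_markov by blast
        then have "(INF a\<in>markov_approx X n. dbar a b) \<le> dbar b b" by (rule INF_lower)
        then show "(INF a\<in>markov_approx X n. dbar a b) \<le> ereal e"
          using e dbar_refl[of b] by (metis ereal_less_eq(5) less_imp_le order.trans)
      qed
      show ?thesis using A B unfolding dbar_H_def by simp
    qed
    then show ?thesis by blast
  qed
  show ?thesis unfolding dbar_approachable_def
  proof (rule order_tendstoI)
    fix a :: ereal assume "a < 0"
    then show "eventually (\<lambda>n. a < ?f n) sequentially"
      using nonneg by (intro always_eventually allI) (rule order.strict_trans2)
  next
    fix a :: ereal assume a: "0 < a"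
    obtain e where e: "e > 0" "ereal e < a"
    proof (cases a)
      case (real r) then show ?thesis using a that[of "r/2"] by simp
    next
      case PInf then show ?thesis using that[of 1] by simp
    next
      case MInf then show ?thesis using a by simp
    qed
    obtain N where "\<forall>n\<ge>N. ?f n \<le> ereal e" using small e(1) by blast
    then show "eventually (\<lambda>n. ?f n < a) sequentially"
      unfolding eventually_sequentially using e(2) by (meson order.strict_trans1)
  qed
qed

end
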